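(* Let $C\subseteq\mathbb{F}^n$ be an $[n,k]$ linear code with full support, and let $T=\boldsymbol{\alpha}^1|\mathfrak{s}_1\otimes\cdots\otimes\boldsymbol{\alpha}^k|\mathfrak{s}_k$ be a minimal linear trellis for $C$. Let $\boldsymbol{\beta}^1,\dots,\boldsymbol{\beta}^k\in C$ be such that $\mathfrak{s}_i$ is a minimal span of $\boldsymbol{\beta}^i$ for every $i$. Then $\boldsymbol{\beta}^1,\dots,\boldsymbol{\beta}^k$ is a basis of $C$, and consequently $T'=\boldsymbol{\beta}^1|\mathfrak{s}_1\otimes\cdots\otimes\boldsymbol{\beta}^k|\mathfrak{s}_k$ is also a minimal linear trellis for $C$.
   Context: Let $\mathbb{F}$ be a finite field and $n\ge1$; indices are taken in $\mathbb{Z}_n$. A trellis $T$ of length $n$ over $\mathbb{F}$ consists of pairwise disjoint finite vertex sets $V_i(T)$, $i\in\mathbb{Z}_n$, and edge sets $E_i(T)\subseteq V_i(T)\times\mathbb{F}\times V_{i+1}(T)$. Trellises are trim. $T$ is linear if each $V_i(T)$ is an $\mathbb{F}$-vector space and each $E_i(T)$ a subspace. $C(T)$ is the set of label sequences of closed paths of length $n$ starting in $V_0(T)$. $T'$ is smaller than $T$ if $|V_i(T')|\le|V_i(T)|$ for all $i$ with some strict inequality; a minimal linear trellis for $C$ is a linear trellis $T$ with $C(T)=C$ such that no linear trellis $T'$ with $C(T')=C$ is smaller than $T$. Spans: for $a\in\mathbb{Z}_n$, $0\le l\le n-1$, $[a,a+l]=\{a,\dots,a+l\}\subseteq\mathbb{Z}_n$,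 $(a,a+l]=[a,a+l]\setminus\{a\}$; $(a,l)$ is a span; degenerate spans $\emptyset$ (length $-1$) and $\mathbb{Z}_n$ (length $n$, written $(a,n)$). Partial order: $(a_1,l_1)\le(a_2,l_2)$ iff ($l_1\le l_2<n-1$ and $[a_1,a_1+l_1]\subseteq[a_2,a_2+l_2]$) or ($l_2=n-1$ and $(a_1,a_1+l_1]\subseteq(a_2,a_2+l_2]$) or $l_1=-1$ or $l_2=n$. A vector $\boldsymbol{\alpha}\in\mathbb{F}^n$ has span $(a,l)$, $0\le l\le n-1$, if its support lies in $[a,a+l]$; $\emptyset$ is a span only of $\mathbf{0}$ and $\mathbb{Z}_n$ of every vector. A minimal span of $\boldsymbol{\alpha}$ is a span $\mathfrak{s}$ of $\boldsymbol{\alpha}$ such that no span $\mathfrak{s}'\lneq\mathfrak{s}$ is a span of $\boldsymbol{\alpha}$. Elementary trellis $\boldsymbol{\alpha}|(a,l)$ ($\boldsymbol{\alpha}$ of span $(a,l)$, $0\le l\le n$): $V_i=\mathbb{F}$ for $i\in(a,a+l]$ (all $i$ if $l=n$), $V_i=0$ otherwise, $E_i=\langle(u_i,\alpha_i,u_{i+1})\rangle$ with $u_i=1$ if $i\in(a,a+l]$, else $0$. The product $T\otimes T'$ has $V_i=V_i(T)\times V_i(T')$ and $E_i=\{((v,v'),\alpha+\alpha',(w,w')):(v,\alpha,w)\in E_i(T),(v',\alpha',w')\in E_i(T')\}$; it satisfies $C(T\otimes T')=C(T)+C(T')$. *)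

theory Defs
  imports Main "HOL.Vector_Spaces" "HOL-Library.Function_Algebras" "HOL-Library.Product_Plus"
begin

(* Vectors of F^n are functions nat => 'f vanishing outside {0..<n};
   indices of Z_n are 0..<n, successor of i is Suc i mod n. *)

definition fvecs :: "nat \<Rightarrow> (nat \<Rightarrow> 'f::zero) set" where
  "fvecs n = {v. \<forall>i\<ge>n. v i = 0}"

definition fscale :: "'f::field \<Rightarrow> (nat \<Rightarrow> 'f) \<Rightarrow> (nat \<Rightarrow> 'f)" where
  "fscale c v = (\<lambda>m. c * v m)"

definition escale :: "'f::field \<Rightarrow> (nat \<Rightarrow> 'f) \<times> 'f \<times> (nat \<Rightarrow> 'f)
    \<Rightarrow> (nat \<Rightarrow> 'f) \<times> 'f \<times> (nat \<Rightarrow> 'f)" where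
  "escale c e = (case e of (v, x, w) \<Rightarrow> (fscale c v, c * x, fscale c w))"

(* Trellis: vertex sets V_i and edge sets E_i, i \<in> Z_n = {0..<n}.
   Vertices of every trellis are taken in the ambient space nat => 'f
   (every finite F-vector space embeds there). *)
record 'f trellis =
  TV :: "nat \<Rightarrow> (nat \<Rightarrow> 'f) set"
  TE :: "nat \<Rightarrow> ((nat \<Rightarrow> 'f) \<times> 'f \<times> (nat \<Rightarrow> 'f)) set"

definition valid_trellis :: "nat \<Rightarrow> 'f trellis \<Rightarrow> bool" where
  "valid_trellis n T \<longleftrightarrow> (\<forall>i<n. finite (TV T i) \<and>
      TE T i \<subseteq> TV T i \<times> UNIV \<times> TV T (Suc i mod n))"

definition closed_path :: "nat \<Rightarrow> 'f trellis \<Rightarrow> (nat \<Rightarrow> nat \<Rightarrow> 'f) \<Rightarrow> (nat \<Rightarrow> 'f) \<Rightarrow> bool" where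
  "closed_path n T v a \<longleftrightarrow> (\<forall>i<n. (v i, a i, v (Suc i mod n)) \<in> TE T i)"

definition code :: "nat \<Rightarrow> 'f::zero trellis \<Rightarrow> (nat \<Rightarrow> 'f) set" where
  "code n T = {a \<in> fvecs n. \<exists>v. closed_path n T v a}"

definition trim :: "nat \<Rightarrow> 'f trellis \<Rightarrow> bool" where
  "trim n T \<longleftrightarrow> (\<forall>i<n.
      (\<forall>x\<in>TV T i. \<exists>v a. closed_path n T v a \<and> v i = x) \<and>
      (\<forall>e\<in>TE T i. \<exists>v a. closed_path n T v a \<and> (v i, a i, v (Suc i mod n)) = e))"

definition linear_trellis :: "nat \<Rightarrow> 'f::field trellis \<Rightarrow> bool" where
  "linear_trellis n T \<longleftrightarrow> valid_trellis n T \<and>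
     (\<forall>i<n. module.subspace fscale (TV T i) \<and> module.subspace escale (TE T i))"

definition smaller :: "nat \<Rightarrow> 'f trellis \<Rightarrow> 'f trellis \<Rightarrow> bool" where
  "smaller n T' T \<longleftrightarrow> (\<forall>i<n. card (TV T' i) \<le> card (TV T i)) \<and>
                       (\<exists>i<n. card (TV T' i) < card (TV T i))"

(* all trellises are trim (standing assumption) *)
definition minimal_linear_trellis :: "nat \<Rightarrow> (nat \<Rightarrow> 'f::field) set \<Rightarrow> 'f trellis \<Rightarrow> bool" where
  "minimal_linear_trellis n C T \<longleftrightarrow> linear_trellis n T \<and> trim n T \<and> code n T = C \<and>
     \<not> (\<exists>T'. linear_trellis n T' \<and> trim n T' \<and> code n T' = C \<and> smaller n T' T)"

(* Spans: a pair (a, l) with a \<in> Z_n and -1 \<le> l \<le> n; l = -1 is the empty span,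
   l = n is Z_n. *)
definition is_span :: "nat \<Rightarrow> nat \<times> int \<Rightarrow> bool" where
  "is_span n s \<longleftrightarrow> fst s < n \<and> -1 \<le> snd s \<and> snd s \<le> int n"

definition cinterval :: "nat \<Rightarrow> nat \<Rightarrow> nat \<Rightarrow> nat set" where
  "cinterval n a l = {(a + j) mod n | j. j \<le> l}"

definition ointerval :: "nat \<Rightarrow> nat \<Rightarrow> nat \<Rightarrow> nat set" where
  "ointerval n a l = {(a + j) mod n | j. 1 \<le> j \<and> j \<le> l}"

definition span_le :: "nat \<Rightarrow> nat \<times> int \<Rightarrow> nat \<times> int \<Rightarrow> bool" where
  "span_le n s1 s2 \<longleftrightarrow> (case s1 of (a1, l1) \<Rightarrow> case s2 of (a2, l2) \<Rightarrow>
      (0 \<le> l1 \<and> l1 \<le> l2 \<and> l2 < int n - 1 \<and>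
         cinterval n a1 (nat l1) \<subseteq> cinterval n a2 (nat l2)) \<or>
      (l2 = int n - 1 \<and> 0 \<le> l1 \<and> l1 \<le> int n - 1 \<and>
         ointerval n a1 (nat l1) \<subseteq> ointerval n a2 (nat l2)) \<or>
      l1 = -1 \<or> l2 = int n)"

definition has_span :: "nat \<Rightarrow> (nat \<Rightarrow> 'f::zero) \<Rightarrow> nat \<times> int \<Rightarrow> bool" where
  "has_span n v s \<longleftrightarrow> (case s of (a, l) \<Rightarrow>
      (if l = -1 then (\<forall>i<n. v i = 0)
       else if l = int n then True
       else (\<forall>i<n. v i \<noteq> 0 \<longrightarrow> i \<in> cinterval n a (nat l))))"

definition minimal_span :: "nat \<Rightarrow> (nat \<Rightarrow> 'f::zero) \<Rightarrow> nat \<times> int \<Rightarrow> bool" where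
  "minimal_span n v s \<longleftrightarrow> is_span n s \<and> has_span n v s \<and>
     \<not> (\<exists>s'. is_span n s' \<and> has_span n v s' \<and> span_le n s' s \<and> \<not> span_le n s s')"

(* Elementary trellis v|(a,l), 0 \<le> l \<le> n; the vertex space F is encoded as
   functions supported at coordinate 0. *)
definition active :: "nat \<Rightarrow> nat \<times> int \<Rightarrow> nat \<Rightarrow> bool" where
  "active n s i \<longleftrightarrow> (case s of (a, l) \<Rightarrow>
      (if l = int n then True else i \<in> ointerval n a (nat l)))"

definition evert :: "bool \<Rightarrow> 'f::zero \<Rightarrow> nat \<Rightarrow> 'f" where
  "evert b c = (\<lambda>m. if m = 0 \<and> b then c else 0)"

definition elementary :: "nat \<Rightarrow> (nat \<Rightarrow> 'f::field) \<Rightarrow> nat \<times> int \<Rightarrow> 'f trellis" where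
  "elementary n v s = \<lparr> TV = (\<lambda>i. {evert (active n s i) c | c. True}),
     TE = (\<lambda>i. {(evert (active n s i) c, c * v i, evert (active n s (Suc i mod n)) c) | c. True}) \<rparr>"

(* product of trellises; pairs of vertices are encoded injectively by interleaving *)
definition interleave :: "(nat \<Rightarrow> 'f) \<Rightarrow> (nat \<Rightarrow> 'f) \<Rightarrow> nat \<Rightarrow> 'f" where
  "interleave v w = (\<lambda>m. if even m then v (m div 2) else w (m div 2))"

definition tprod :: "'f::plus trellis \<Rightarrow> 'f trellis \<Rightarrow> 'f trellis" where
  "tprod T T' = \<lparr> TV = (\<lambda>i. {interleave v v' | v v'. v \<in> TV T i \<and> v' \<in> TV T' i}),
     TE = (\<lambda>i. {(interleave v v', x + x', interleave w w') | v x w v' x' w'.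
                 (v, x, w) \<in> TE T i \<and> (v', x', w') \<in> TE T' i}) \<rparr>"

fun tprods :: "'f::{plus,zero} trellis list \<Rightarrow> 'f trellis" where
  "tprods [] = \<lparr> TV = (\<lambda>i. {0}), TE = (\<lambda>i. {(0, 0, 0)}) \<rparr>"
| "tprods [T] = T"
| "tprods (T # Ts) = tprod T (tprods Ts)"

end

theory Submission
  imports Defs
begin


interpretation V: vector_space "fscale :: 'f::field \<Rightarrow> (nat \<Rightarrow> 'f) \<Rightarrow> _"
  by unfold_locales (auto simp: fscale_def algebra_simps)

lemma mod_e: "module (escale :: 'f::field \<Rightarrow> _)"
  by unfold_locales (auto simp: escale_def fscale_def algebra_simps split: prod.splits)

lemma sub_f: "module.subspace fscale S \<longleftrightarrow> 0 \<in> S \<and> (\<forall>x\<in>S. \<forall>y\<in>S. x + y \<in> S) \<and> (\<forall>c. \<forall>x\<in>S. fscale c x \<in> S)"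
  by (simp add: V.subspace_def)
lemma sub_e: "module.subspace escale S \<longleftrightarrow> 0 \<in> S \<and> (\<forall>x\<in>S. \<forall>y\<in>S. x + y \<in> S) \<and> (\<forall>c. \<forall>x\<in>S. escale c x \<in> S)"
  by (simp add: module.subspace_def[OF mod_e])


lemma interleave_eq_iff: "interleave v v' = interleave w w' \<longleftrightarrow> v = w \<and> v' = w'"
proof
  assume h: "interleave v v' = interleave w w'"
  have "v m = w m \<and> v' m = w' m" for m
    using fun_cong[OF h, of "2*m"] fun_cong[OF h, of "2*m+1"] by (simp add: interleave_def)
  then show "v = w \<and> v' = w'" by auto
qed simp

lemma interleave_add: "interleave v v' + interleave w w' = interleave (v + w) (v' + w')"
  by (auto simp: interleave_def)
lemma interleave_scale: "fscale c (interleave v v') = interleave (fscale c v) (fscale c v')"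
  by (auto simp: interleave_def fscale_def)
lemma interleave_zero: "interleave 0 0 = 0"
  by (auto simp: interleave_def)

definition good :: "nat \<Rightarrow> 'f::field trellis \<Rightarrow> bool" where
  "good n T \<longleftrightarrow> linear_trellis n T \<and> trim n T"

lemma evert_add: "evert b (c::'f::monoid_add) + evert b d = evert b (c + d)"
  by (rule ext) (auto simp: evert_def)
lemma evert_scale: "fscale e (evert b c) = evert b (e * c)"
  by (auto simp: evert_def fscale_def)
lemma evert_zero: "evert b 0 = 0"
  by (auto simp: evert_def)

lemma good_elem: "good n (elementary n (g::nat \<Rightarrow> 'f::{finite,field}) s)"
proof -
  let ?T = "elementary n g s"
  have TV: "TV ?T i = range (evert (active n s i))" for i
    by (auto simp: elementary_def)
  have valid: "valid_trellis n ?T"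
    unfolding valid_trellis_def by (auto simp: TV) (auto simp: elementary_def)
  have sv: "module.subspace fscale (TV ?T i)" for i
    unfolding sub_f TV
    by (auto simp: evert_add evert_scale) (metis evert_zero rangeI)
  have se: "module.subspace escale (TE ?T i)" for i
    unfolding sub_e
  proof (intro conjI ballI allI)
    show "0 \<in> TE ?T i"
      by (auto simp: elementary_def zero_prod_def evert_zero intro!: exI[of _ 0])
  next
    fix x y assume "x \<in> TE ?T i" "y \<in> TE ?T i"
    then obtain c d where "x = (evert (active n s i) c, c * g i, evert (active n s (Suc i mod n)) c)"
       "y = (evert (active n s i) d, d * g i, evert (active n s (Suc i mod n)) d)"
      by (auto simp: elementary_def)
    then show "x + y \<in> TE ?T i"
      by (auto simp: elementary_def evert_add distrib_right intro!: exI[of _ "c+d"])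
  next
    fix c x assume "x \<in> TE ?T i"
    then obtain d where "x = (evert (active n s i) d, d * g i, evert (active n s (Suc i mod n)) d)"
      by (auto simp: elementary_def)
    then show "escale c x \<in> TE ?T i"
      by (auto simp: elementary_def escale_def evert_scale mult.assoc intro!: exI[of _ "c*d"])
  qed
  have path: "closed_path n ?T (\<lambda>i. evert (active n s i) c) (\<lambda>i. c * g i)" for c
    by (auto simp: closed_path_def elementary_def)
  have trim: "trim n ?T"
    unfolding trim_def
  proof (intro allI impI conjI ballI)
    fix i x assume "x \<in> TV ?T i"
    then obtain c where "x = evert (active n s i) c" by (auto simp: TV)
    then show "\<exists>v a. closed_path n ?T v a \<and> v i = x" using path by blast
  next
    fix i e assume "e \<in> TE ?T i"
    then obtain c where "e = (evert (active n s i) c, c * g i, evert (active n s (Suc i mod n)) c)"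
      by (auto simp: elementary_def)
    then show "\<exists>v a. closed_path n ?T v a \<and> (v i, a i, v (Suc i mod n)) = e" using path by blast
  qed
  show ?thesis using valid sv se trim by (simp add: good_def linear_trellis_def)
qed

lemma good_nil: "good n (tprods [] :: 'f::field trellis)"
proof -
  let ?T = "tprods [] :: 'f trellis"
  have path: "closed_path n ?T (\<lambda>i. 0) (\<lambda>i. 0)" by (simp add: closed_path_def)
  show ?thesis
    unfolding good_def linear_trellis_def valid_trellis_def sub_f sub_e trim_def
    using path by (auto simp: escale_def fscale_def zero_prod_def zero_fun_def)
qed

lemma good_prod:
  assumes g1: "good n (T1 :: 'f::field trellis)" and g2: "good n T2"
  shows "good n (tprod T1 T2)"
proof -
  let ?T = "tprod T1 T2"
  have TV: "TV ?T i = (\<lambda>(v,v'). interleave v v') ` (TV T1 i \<times> TV T2 i)" for i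
    by (auto simp: tprod_def)
  have valid: "valid_trellis n ?T"
    using g1 g2 unfolding valid_trellis_def good_def linear_trellis_def
    by (auto simp: TV) (auto simp: tprod_def dest!: subsetD)
  have sv: "module.subspace fscale (TV ?T i)" if "i < n" for i
  proof -
    have a: "module.subspace fscale (TV T1 i)" "module.subspace fscale (TV T2 i)"
      using g1 g2 that by (auto simp: good_def linear_trellis_def)
    show ?thesis using a unfolding sub_f
      apply (simp add: tprod_def)
      apply (intro conjI)
        apply (metis interleave_zero)
       apply (metis interleave_add)
      apply (metis interleave_scale)
      done
  qed
  have se: "module.subspace escale (TE ?T i)" if "i < n" for i
  proof -
    have a: "module.subspace escale (TE T1 i)" "module.subspace escale (TE T2 i)"
      using g1 g2 that by (auto simp: good_def linear_trellis_def)
    show ?thesis using a unfolding sub_e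
    proof (intro conjI ballI allI)
      show "0 \<in> TE ?T i" using a unfolding sub_e
        apply (simp add: tprod_def zero_prod_def)
        by (metis add_0 interleave_zero)
    next
      fix x y assume "x \<in> TE ?T i" "y \<in> TE ?T i"
      then obtain v1 x1 w1 v1' x1' w1' v2 x2 w2 v2' x2' w2' where
        x: "x = (interleave v1 v1', x1 + x1', interleave w1 w1')"
          "(v1,x1,w1) \<in> TE T1 i" "(v1',x1',w1') \<in> TE T2 i"
        and y: "y = (interleave v2 v2', x2 + x2', interleave w2 w2')"
          "(v2,x2,w2) \<in> TE T1 i" "(v2',x2',w2') \<in> TE T2 i"
        by (auto simp: tprod_def)
      have "(v1,x1,w1) + (v2,x2,w2) \<in> TE T1 i" "(v1',x1',w1') + (v2',x2',w2') \<in> TE T2 i"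
        using a x y unfolding sub_e by blast+
      then have "(v1+v2,x1+x2,w1+w2) \<in> TE T1 i" "(v1'+v2',x1'+x2',w1'+w2') \<in> TE T2 i" by simp_all
      moreover have "x + y = (interleave (v1+v2) (v1'+v2'), (x1+x2) + (x1'+x2'), interleave (w1+w2) (w1'+w2'))"
        using x y by (simp add: interleave_add algebra_simps)
      ultimately show "x + y \<in> TE ?T i" by (simp add: tprod_def) blast
    next
      fix c x assume "x \<in> TE ?T i"
      then obtain v1 x1 w1 v1' x1' w1' where
        x: "x = (interleave v1 v1', x1 + x1', interleave w1 w1')"
          "(v1,x1,w1) \<in> TE T1 i" "(v1',x1',w1') \<in> TE T2 i"
        by (auto simp: tprod_def)
      have "escale c (v1,x1,w1) \<in> TE T1 i" "escale c (v1',x1',w1') \<in> TE T2 i"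
        using a x unfolding sub_e by blast+
      then have "(fscale c v1, c*x1, fscale c w1) \<in> TE T1 i" "(fscale c v1', c*x1', fscale c w1') \<in> TE T2 i"
        by (simp_all add: escale_def)
      moreover have "escale c x = (interleave (fscale c v1) (fscale c v1'), c*x1 + c*x1', interleave (fscale c w1) (fscale c w1'))"
        using x by (simp add: escale_def interleave_scale algebra_simps)
      ultimately show "escale c x \<in> TE ?T i" by (simp add: tprod_def) blast
    qed
  qed
  have comb: "closed_path n ?T (\<lambda>i. interleave (p1 i) (p2 i)) (\<lambda>i. a1 i + a2 i)"
    if "closed_path n T1 p1 a1" "closed_path n T2 p2 a2" for p1 a1 p2 a2
    using that unfolding closed_path_def tprod_def by fastforce
  have tr1: "trim n T1" and tr2: "trim n T2" using g1 g2 by (auto simp: good_def)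
  have trim: "trim n ?T"
    unfolding trim_def
  proof (intro allI impI conjI ballI)
    fix i x assume i: "i < n" and "x \<in> TV ?T i"
    then obtain v v' where x: "x = interleave v v'" "v \<in> TV T1 i" "v' \<in> TV T2 i" by (auto simp: tprod_def)
    obtain p1 a1 where "closed_path n T1 p1 a1" "p1 i = v" using tr1 i x unfolding trim_def by blast
    moreover obtain p2 a2 where "closed_path n T2 p2 a2" "p2 i = v'" using tr2 i x unfolding trim_def by blast
    ultimately show "\<exists>v a. closed_path n ?T v a \<and> v i = x" using comb x by blast
  next
    fix i e assume i: "i < n" and "e \<in> TE ?T i"
    then obtain v1 x1 w1 v1' x1' w1' where
        x: "e = (interleave v1 v1', x1 + x1', interleave w1 w1')"
          "(v1,x1,w1) \<in> TE T1 i" "(v1',x1',w1') \<in> TE T2 i"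
        by (auto simp: tprod_def)
    obtain p1 a1 where "closed_path n T1 p1 a1" "(p1 i, a1 i, p1 (Suc i mod n)) = (v1,x1,w1)"
      using tr1 i x unfolding trim_def by blast
    moreover obtain p2 a2 where "closed_path n T2 p2 a2" "(p2 i, a2 i, p2 (Suc i mod n)) = (v1',x1',w1')"
      using tr2 i x unfolding trim_def by blast
    ultimately show "\<exists>v a. closed_path n ?T v a \<and> (v i, a i, v (Suc i mod n)) = e"
      using comb x by fastforce
  qed
  show ?thesis using valid sv se trim by (simp add: good_def linear_trellis_def)
qed

lemma good_tprods: "(\<And>T. T \<in> set Ts \<Longrightarrow> good n T) \<Longrightarrow> good n (tprods Ts :: 'f::field trellis)"
proof (induction Ts rule: tprods.induct)
  case 1 show ?case by (rule good_nil)
qed (simp_all add: good_prod)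



lemma deint: "interleave v v' = X \<Longrightarrow> v = (\<lambda>m. X (2*m)) \<and> v' = (\<lambda>m. X (2*m+1))"
  by (auto simp: interleave_def)

lemma code_tprod:
  "code n (tprod T1 T2) = {a + b | a b. a \<in> code n T1 \<and> b \<in> code n (T2 :: 'f::{monoid_add} trellis)}"
proof (intro equalityI subsetI)
  fix a assume "a \<in> code n (tprod T1 T2)"
  then obtain P where a: "a \<in> fvecs n" and P: "closed_path n (tprod T1 T2) P a"
    by (auto simp: code_def)
  define p1 where "p1 i = (\<lambda>m. P i (2*m))" for i
  define p2 where "p2 i = (\<lambda>m. P i (2*m+1))" for i
  have "\<forall>i. i < n \<longrightarrow> (\<exists>x x'. a i = x + x' \<and> (p1 i, x, p1 (Suc i mod n)) \<in> TE T1 i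
                  \<and> (p2 i, x', p2 (Suc i mod n)) \<in> TE T2 i)"
  proof (intro allI impI)
    fix i assume "i < n"
    then obtain v x w v' x' w' where e: "P i = interleave v v'" "a i = x + x'"
      "P (Suc i mod n) = interleave w w'" "(v,x,w) \<in> TE T1 i" "(v',x',w') \<in> TE T2 i"
      using P unfolding closed_path_def tprod_def by fastforce
    from deint[OF e(1)[symmetric]] deint[OF e(3)[symmetric]]
    have "v = p1 i" "v' = p2 i" "w = p1 (Suc i mod n)" "w' = p2 (Suc i mod n)"
      by (auto simp: p1_def p2_def)
    then show "\<exists>x x'. a i = x + x' \<and> (p1 i, x, p1 (Suc i mod n)) \<in> TE T1 i
                  \<and> (p2 i, x', p2 (Suc i mod n)) \<in> TE T2 i" using e by blast
  qed
  then obtain X X' where XX: "\<And>i. i < n \<Longrightarrow> a i = X i + X' i \<and> (p1 i, X i, p1 (Suc i mod n)) \<in> TE T1 i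
                  \<and> (p2 i, X' i, p2 (Suc i mod n)) \<in> TE T2 i"
    by metis
  define a1 where "a1 = (\<lambda>i. if i < n then X i else 0)"
  define a2 where "a2 = (\<lambda>i. if i < n then X' i else 0)"
  have "a1 \<in> code n T1" using XX unfolding code_def fvecs_def closed_path_def a1_def
    by (auto intro!: exI[of _ p1])
  moreover have "a2 \<in> code n T2" using XX unfolding code_def fvecs_def closed_path_def a2_def
    by (auto intro!: exI[of _ p2])
  moreover have "a = a1 + a2"
  proof
    fix m show "a m = (a1 + a2) m"
      using XX[of m] a by (cases "m < n") (auto simp: a1_def a2_def fvecs_def)
  qed
  ultimately show "a \<in> {a + b | a b. a \<in> code n T1 \<and> b \<in> code n T2}" by blast
next
  fix c assume "c \<in> {a + b | a b. a \<in> code n T1 \<and> b \<in> code n T2}"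
  then obtain a b p q where c: "c = a + b" "a \<in> fvecs n" "b \<in> fvecs n"
    "closed_path n T1 p a" "closed_path n T2 q b"
    by (auto simp: code_def)
  have "closed_path n (tprod T1 T2) (\<lambda>i. interleave (p i) (q i)) c"
    using c unfolding closed_path_def tprod_def by fastforce
  moreover have "c \<in> fvecs n" using c by (auto simp: fvecs_def)
  ultimately show "c \<in> code n (tprod T1 T2)" by (auto simp: code_def)
qed

lemma code_nil: "code n (tprods [] :: 'f::{plus,zero} trellis) = {0}"
proof -
  have "x = 0" if "\<forall>i\<ge>n. x i = 0" "\<forall>i<n. x i = 0" for x :: "nat \<Rightarrow> 'f"
  proof
    fix m show "x m = 0 m" using that by (cases "m < n") auto
  qed
  then show ?thesis by (auto simp: code_def closed_path_def fvecs_def)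
qed



lemma evert_True0: "evert True c 0 = c" by (simp add: evert_def)

lemma code_elem:
  assumes n: "n \<ge> 1" and g: "g \<in> fvecs n" and hs: "has_span n g (a0, l)"
    and sp: "a0 < n" "0 \<le> l" "l \<le> int n"
  shows "code n (elementary n (g :: nat \<Rightarrow> 'f::field) (a0, l)) = range (\<lambda>c. fscale c g)"
proof (intro equalityI subsetI)
  fix x assume "x \<in> range (\<lambda>c. fscale c g)"
  then obtain c where x: "x = fscale c g" by auto
  have "closed_path n (elementary n g (a0,l)) (\<lambda>i. evert (active n (a0,l) i) c) (\<lambda>i. c * g i)"
    by (auto simp: closed_path_def elementary_def)
  moreover have "x \<in> fvecs n" using g by (auto simp: x fvecs_def fscale_def)
  ultimately show "x \<in> code n (elementary n g (a0, l))"
    by (auto simp: code_def x fscale_def)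
next
  let ?act = "active n (a0,l)"
  fix x assume "x \<in> code n (elementary n g (a0, l))"
  then obtain P where x: "x \<in> fvecs n" and P: "closed_path n (elementary n g (a0,l)) P x"
    by (auto simp: code_def)
  have "\<forall>i. i < n \<longrightarrow> (\<exists>c. P i = evert (?act i) c \<and> x i = c * g i \<and> P (Suc i mod n) = evert (?act (Suc i mod n)) c)"
    using P by (auto simp: closed_path_def elementary_def)
  then obtain cf where cf: "\<And>i. i < n \<Longrightarrow> P i = evert (?act i) (cf i) \<and> x i = cf i * g i \<and>
      P (Suc i mod n) = evert (?act (Suc i mod n)) (cf i)" by metis
  have in_act: "\<And>i. i < n \<Longrightarrow> ?act i \<Longrightarrow> P i 0 = cf i" using cf by (simp add: evert_def)
  have out_act: "\<And>i. i < n \<Longrightarrow> ?act (Suc i mod n) \<Longrightarrow> P (Suc i mod n) 0 = cf i"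
  proof -
    fix i assume "i < n" "?act (Suc i mod n)"
    then show "P (Suc i mod n) 0 = cf i" using cf[of i] by (simp add: evert_def)
  qed
  have "\<exists>c. \<forall>i<n. x i = c * g i"
  proof (cases "l = int n")
    case True
    then have act: "?act i" for i by (simp add: active_def)
    have eq: "i < n \<Longrightarrow> cf i = cf 0" for i
    proof (induction i)
      case (Suc i)
      then have "Suc i mod n = Suc i" by simp
      have "cf (Suc i) = P (Suc i) 0" using in_act[of "Suc i"] act Suc.prems by simp
      also have "\<dots> = cf i" using out_act[of i] act Suc.prems \<open>Suc i mod n = Suc i\<close> by simp
      finally show ?case using Suc by simp
    qed simp
    show ?thesis using cf eq by (metis)
  next
    case False
    then have act: "?act i \<longleftrightarrow> i \<in> ointerval n a0 (nat l)" for i by (simp add: active_def)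
    have eq: "j \<le> nat l \<Longrightarrow> cf ((a0 + j) mod n) = cf a0" for j
    proof (induction j)
      case 0 then show ?case using sp by simp
    next
      case (Suc j)
      have m: "Suc ((a0 + j) mod n) mod n = (a0 + Suc j) mod n" by (simp add: mod_Suc_eq)
      have "(a0 + Suc j) mod n \<in> ointerval n a0 (nat l)" unfolding ointerval_def
        using Suc.prems by (intro CollectI exI[of _ "Suc j"]) simp
      then have a: "?act ((a0 + Suc j) mod n)" by (simp add: act)
      have "P ((a0 + Suc j) mod n) 0 = cf ((a0 + j) mod n)"
        using out_act[of "(a0 + j) mod n"] a m n by simp
      moreover have "P ((a0 + Suc j) mod n) 0 = cf ((a0 + Suc j) mod n)"
        using in_act a n by simp
      ultimately show ?case using Suc by simp
    qed
    have hs': "\<forall>i<n. g i \<noteq> 0 \<longrightarrow> i \<in> cinterval n a0 (nat l)"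
      using hs False sp by (simp add: has_span_def)
    have "x i = cf a0 * g i" if ilt: "i < n" for i
    proof (cases "g i = 0")
      case True then show ?thesis using cf ilt by simp
    next
      case False
      then have "i \<in> cinterval n a0 (nat l)" using hs' ilt by blast
      then obtain j where "i = (a0 + j) mod n" "j \<le> nat l" by (auto simp: cinterval_def)
      then show ?thesis using cf ilt eq by auto
    qed
    then show ?thesis by blast
  qed
  then obtain c where c: "\<forall>i<n. x i = c * g i" by blast
  have "x = fscale c g"
  proof
    fix m show "x m = fscale c g m"
      using c x g by (cases "m < n") (auto simp: fscale_def fvecs_def)
  qed
  then show "x \<in> range (\<lambda>c. fscale c g)" by blast
qed



lemma code_kv:
  assumes n: "n \<ge> 1" and d: "distinct xs"
    and h: "\<forall>j\<in>set xs. g j \<in> fvecs n \<and> has_span n (g j) (s j) \<and> fst (s j) < n \<and> 0 \<le> snd (s j) \<and> snd (s j) \<le> int n"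
  shows "code n (tprods (map (\<lambda>j. elementary n (g j :: nat \<Rightarrow> 'f::field) (s j)) xs))
          = {\<Sum>j\<in>set xs. fscale (c j) (g j) | c. True}"
  using d h
proof (induction xs)
  case Nil
  show ?case using code_nil[of n, where 'f='f] by (simp add: zero_fun_def)
next
  case (Cons x xs)
  obtain a0 l where sx: "s x = (a0, l)" by fastforce
  have ce: "code n (elementary n (g x) (s x)) = range (\<lambda>c. fscale c (g x))"
    using code_elem[OF n, of "g x" a0 l] Cons.prems sx by auto
  show ?case
  proof (cases "xs = []")
    case True
    then show ?thesis using ce by auto
  next
    case False
    then have t: "tprods (map (\<lambda>j. elementary n (g j) (s j)) (x # xs)) =
       tprod (elementary n (g x) (s x)) (tprods (map (\<lambda>j. elementary n (g j) (s j)) xs))"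
      by (cases xs) auto
    have IH: "code n (tprods (map (\<lambda>j. elementary n (g j) (s j)) xs)) = {\<Sum>j\<in>set xs. fscale (c j) (g j) | c. True}"
      using Cons by auto
    have xn: "x \<notin> set xs" using Cons.prems by auto
    show ?thesis unfolding t code_tprod IH ce
    proof (intro equalityI subsetI)
      fix y assume "y \<in> {a + b |a b. a \<in> range (\<lambda>c. fscale c (g x)) \<and> b \<in> {\<Sum>j\<in>set xs. fscale (c j) (g j) |c. True}}"
      then obtain c0 c where y: "y = fscale c0 (g x) + (\<Sum>j\<in>set xs. fscale (c j) (g j))" by auto
      have "(\<Sum>j\<in>set xs. fscale ((c(x := c0)) j) (g j)) = (\<Sum>j\<in>set xs. fscale (c j) (g j))"
        using xn by (intro sum.cong) auto
      then have "y = (\<Sum>j\<in>set (x # xs). fscale ((c(x := c0)) j) (g j))"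
        using xn y by simp
      then show "y \<in> {\<Sum>j\<in>set (x # xs). fscale (c j) (g j) |c. True}" by blast
    next
      fix y assume "y \<in> {\<Sum>j\<in>set (x # xs). fscale (c j) (g j) |c. True}"
      then obtain c where "y = (\<Sum>j\<in>set (x # xs). fscale (c j) (g j))" by auto
      then have "y = fscale (c x) (g x) + (\<Sum>j\<in>set xs. fscale (c j) (g j))" using xn by simp
      then show "y \<in> {a + b |a b. a \<in> range (\<lambda>c. fscale c (g x)) \<and> b \<in> {\<Sum>j\<in>set xs. fscale (c j) (g j) |c. True}}"
        by blast
    qed
  qed
qed

lemma span_image_sum:
  assumes "finite A"
  shows "V.span (g ` A) = {\<Sum>j\<in>A. fscale (c j) (g j :: nat \<Rightarrow> 'f::field) | c. True}"
  using assms
proof (induction A rule: finite_induct)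
  case empty
  then show ?case by (simp add: zero_fun_def)
next
  case (insert x A)
  have "V.span (g ` insert x A) = {y. \<exists>k. y - fscale k (g x) \<in> V.span (g ` A)}"
    by (simp add: V.span_insert)
  also have "\<dots> = {\<Sum>j\<in>insert x A. fscale (c j) (g j) | c. True}"
  proof (intro equalityI subsetI)
    fix y assume "y \<in> {y. \<exists>k. y - fscale k (g x) \<in> V.span (g ` A)}"
    then obtain k c where yc: "y - fscale k (g x) = (\<Sum>j\<in>A. fscale (c j) (g j))" using insert.IH by auto
    have "(\<Sum>j\<in>A. fscale ((c(x := k)) j) (g j)) = (\<Sum>j\<in>A. fscale (c j) (g j))"
      using insert.hyps by (intro sum.cong) auto
    then have "y = (\<Sum>j\<in>insert x A. fscale ((c(x := k)) j) (g j))"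
      using insert.hyps yc by (simp add: algebra_simps)
    then show "y \<in> {\<Sum>j\<in>insert x A. fscale (c j) (g j) | c. True}" by blast
  next
    fix y assume "y \<in> {\<Sum>j\<in>insert x A. fscale (c j) (g j) | c. True}"
    then obtain c where "y = (\<Sum>j\<in>insert x A. fscale (c j) (g j))" by auto
    then have "y - fscale (c x) (g x) = (\<Sum>j\<in>A. fscale (c j) (g j))" using insert.hyps by simp
    then show "y \<in> {y. \<exists>k. y - fscale k (g x) \<in> V.span (g ` A)}" using insert.IH by blast
  qed
  finally show ?case .
qed

lemma card_TV_elem: "card (TV (elementary n (g :: nat \<Rightarrow> 'f::{finite,field}) s) i) = (if active n s i then card (UNIV :: 'f set) else 1)"
proof -
  have TV: "TV (elementary n (g :: nat \<Rightarrow> 'f) s) i = range (evert (active n s i))"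
    by (auto simp: elementary_def)
  show ?thesis
  proof (cases "active n s i")
    case True
    have "inj (evert True :: 'f \<Rightarrow> _)" by (rule injI) (metis evert_True0)
    then show ?thesis using True by (simp add: TV card_image)
  next
    case False
    have "range (evert False :: 'f \<Rightarrow> _) = {0}" by (auto simp: evert_def zero_fun_def)
    then show ?thesis using False by (simp add: TV)
  qed
qed

lemma card_TV_prod: "card (TV (tprod T1 T2) i) = card (TV T1 i) * card (TV T2 i)"
proof -
  have TV: "TV (tprod T1 T2) i = (\<lambda>(v,v'). interleave v v') ` (TV T1 i \<times> TV T2 i)" 
    by (auto simp: tprod_def)
  have "inj_on (\<lambda>(v,v'). interleave v v') (TV T1 i \<times> TV T2 i)"
    by (auto simp: inj_on_def interleave_eq_iff)
  then show ?thesis by (simp add: TV card_image card_cartesian_product)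
qed

definition fsz :: "'f itself \<Rightarrow> nat \<Rightarrow> nat \<times> int \<Rightarrow> nat \<Rightarrow> nat" where
  "fsz t n s i = (if active n s i then card (UNIV :: 'f set) else 1)"

lemma card_kv:
  assumes d: "distinct xs"
  shows "card (TV (tprods (map (\<lambda>j. elementary n (g j :: nat \<Rightarrow> 'f::{finite,field}) (s j)) xs)) i)
          = (\<Prod>j\<in>set xs. fsz TYPE('f) n (s j) i)"
  using d
proof (induction xs)
  case Nil
  then show ?case by simp
next
  case (Cons x xs)
  show ?case
  proof (cases "xs = []")
    case True
    then show ?thesis by (simp add: card_TV_elem fsz_def)
  next
    case False
    then have t: "tprods (map (\<lambda>j. elementary n (g j) (s j)) (x # xs)) =
       tprod (elementary n (g x) (s x)) (tprods (map (\<lambda>j. elementary n (g j) (s j)) xs))"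
      by (cases xs) auto
    show ?thesis unfolding t card_TV_prod using Cons by (simp add: card_TV_elem fsz_def)
  qed
qed



lemma cint_full: assumes "a < n" "i < n" shows "i \<in> cinterval n a (n - 1)"
proof -
  define j where "j = (i + n - a) mod n"
  have "j \<le> n - 1" using assms by (simp add: j_def less_Suc_eq_le[symmetric])
  moreover have "(a + j) mod n = i"
  proof -
    have "(a + j) mod n = (a + (i + n - a)) mod n" by (simp add: j_def mod_add_right_eq)
    also have "a + (i + n - a) = i + n" using assms by simp
    finally show ?thesis using assms by simp
  qed
  ultimately show ?thesis unfolding cinterval_def by blast
qed

lemma oint_shift_sub: assumes l: "1 \<le> l" shows "ointerval n (Suc a mod n) (l - 1) \<subseteq> ointerval n a l"
proof
  fix x assume "x \<in> ointerval n (Suc a mod n) (l - 1)"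
  then obtain j where "x = (Suc a mod n + j) mod n" "1 \<le> j" "j \<le> l - 1" by (auto simp: ointerval_def)
  then have "x = (a + Suc j) mod n" "1 \<le> Suc j" "Suc j \<le> l" using l by (auto simp: mod_add_left_eq)
  then show "x \<in> ointerval n a l" unfolding ointerval_def by blast
qed

lemma cint_shift_sub: assumes l: "1 \<le> l" shows "cinterval n (Suc a mod n) (l - 1) \<subseteq> cinterval n a l"
proof
  fix x assume "x \<in> cinterval n (Suc a mod n) (l - 1)"
  then obtain j where "x = (Suc a mod n + j) mod n" "j \<le> l - 1" by (auto simp: cinterval_def)
  then have "x = (a + Suc j) mod n" "Suc j \<le> l" using l by (auto simp: mod_add_left_eq)
  then show "x \<in> cinterval n a l" unfolding cinterval_def by blast
qed

lemma shift_in: "a < n \<Longrightarrow> 1 \<le> l \<Longrightarrow> Suc a mod n \<in> ointerval n a l"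
  unfolding ointerval_def by (intro CollectI exI[of _ 1]) simp

lemma shift_notin:
  assumes "l < n" shows "Suc a mod n \<notin> ointerval n (Suc a mod n) (l - 1)"
proof
  assume "Suc a mod n \<in> ointerval n (Suc a mod n) (l - 1)"
  then obtain j where j0: "Suc a mod n = (Suc a mod n + j) mod n" "1 \<le> j" "j \<le> l - 1"
    unfolding ointerval_def by blast
  then have j: "(Suc a mod n + j) mod n = Suc a mod n" "1 \<le> j" "j \<le> l - 1" by simp_all
  define x where "x = Suc a mod n"
  have n0: "n > 0" using assms by simp
  have x: "x < n" using n0 by (simp add: x_def)
  have jn: "j < n" using j assms by simp
  have "(x + j) mod n = x" using j by (simp add: x_def)
  moreover have "(x + j) mod n \<noteq> x"
  proof (cases "x + j < n")
    case True then show ?thesis using j by simp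
  next
    case False
    then have "(x + j) mod n = x + j - n" using x jn by (simp add: mod_if)
    then show ?thesis using False jn j by simp
  qed
  ultimately show False by simp
qed

lemma has_span_shift:
  assumes n: "n \<ge> 1" and hs: "has_span n v (a, l)" and l: "1 \<le> l" "l \<le> int n - 1" and a: "a < n"
    and va: "v a = 0"
  shows "has_span n v (Suc a mod n, l - 1)"
proof -
  have s: "\<forall>i<n. v i \<noteq> 0 \<longrightarrow> i \<in> cinterval n a (nat l)" using hs l by (simp add: has_span_def)
  have "i \<in> cinterval n (Suc a mod n) (nat (l - 1))" if "i < n" "v i \<noteq> 0" for i
  proof -
    have "i \<in> cinterval n a (nat l)" using s that by blast
    then obtain j where j: "i = (a + j) mod n" "j \<le> nat l" by (auto simp: cinterval_def)
    have "j \<noteq> 0"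
    proof
      assume "j = 0" then show False using j that va a by simp
    qed
    then obtain j' where "j = Suc j'" by (cases j) auto
    then have "i = (Suc a mod n + j') mod n" "j' \<le> nat (l - 1)" using j by (auto simp: mod_add_left_eq)
    then show ?thesis unfolding cinterval_def by blast
  qed
  then show ?thesis using l by (simp add: has_span_def)
qed

lemma has_span_zero0:
  assumes hs: "has_span n v (a, 0)" and a: "a < n" and va: "v a = 0" and n: "n \<ge> 1"
  shows "\<forall>i<n. v i = 0"
  using hs a va n by (auto simp: has_span_def cinterval_def)

lemma minspan_len:
  assumes n: "n \<ge> 1" and m: "minimal_span n v (a, l)"
  shows "l \<le> int n - 1"
proof (rule ccontr)
  assume "\<not> l \<le> int n - 1"
  then have ln: "l = int n" using m by (auto simp: minimal_span_def is_span_def)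
  have a: "a < n" using m by (auto simp: minimal_span_def is_span_def)
  have "is_span n (a, int n - 1)" using a n by (simp add: is_span_def)
  moreover have "has_span n v (a, int n - 1)" using n a cint_full[OF a]
    by (auto simp: has_span_def nat_diff_distrib)
  moreover have "span_le n (a, int n - 1) (a, l)" using ln by (simp add: span_le_def)
  moreover have "\<not> span_le n (a, l) (a, int n - 1)" using ln n by (simp add: span_le_def)
  ultimately show False using m unfolding minimal_span_def by blast
qed

lemma minspan_start:
  assumes n: "n \<ge> 1" and m: "minimal_span n v (a, l)" and l0: "0 \<le> l"
  shows "v a \<noteq> 0"
proof
  assume va: "v a = 0"
  have a: "a < n" and hs: "has_span n v (a, l)" using m by (auto simp: minimal_span_def is_span_def)
  have ln: "l \<le> int n - 1" using minspan_len[OF n m] .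
  show False
  proof (cases "l = 0")
    case True
    have "has_span n v (a, -1)" using has_span_zero0[of n v a] hs True a va n by (simp add: has_span_def)
    moreover have "is_span n (a, -1)" using a by (simp add: is_span_def)
    moreover have "span_le n (a, -1) (a, l)" by (simp add: span_le_def)
    moreover have "\<not> span_le n (a, l) (a, -1)" using True n by (simp add: span_le_def)
    ultimately show False using m unfolding minimal_span_def by blast
  next
    case False
    then have l1: "1 \<le> l" using l0 by simp
    have hs': "has_span n v (Suc a mod n, l - 1)" by (rule has_span_shift[OF n hs l1 ln a va])
    have isp: "is_span n (Suc a mod n, l - 1)" using n l1 ln by (simp add: is_span_def)
    have le: "span_le n (Suc a mod n, l - 1) (a, l)"
    proof (cases "l < int n - 1")
      case True
      have "cinterval n (Suc a mod n) (nat (l - 1)) \<subseteq> cinterval n a (nat l)"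
        using cint_shift_sub[of "nat l" n a] l1 by (simp add: nat_diff_distrib)
      then show ?thesis using True l1 by (simp add: span_le_def)
    next
      case False
      then have "l = int n - 1" using ln by simp
      moreover have "ointerval n (Suc a mod n) (nat (l - 1)) \<subseteq> ointerval n a (nat l)"
        using oint_shift_sub[of "nat l" n a] l1 by (simp add: nat_diff_distrib)
      ultimately show ?thesis using l1 by (simp add: span_le_def)
    qed
    have nle: "\<not> span_le n (a, l) (Suc a mod n, l - 1)" using ln l1 by (auto simp: span_le_def)
    show False using m hs' isp le nle unfolding minimal_span_def by blast
  qed
qed



definition KV :: "nat \<Rightarrow> nat \<Rightarrow> (nat \<Rightarrow> nat \<Rightarrow> 'f::field) \<Rightarrow> (nat \<Rightarrow> nat \<times> int) \<Rightarrow> 'f trellis" where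
  "KV n k g s = tprods (map (\<lambda>j. elementary n (g j) (s j)) [0..<k])"

lemma KV_good: "good n (KV n k (g :: nat \<Rightarrow> nat \<Rightarrow> 'f::{finite,field}) s)"
  unfolding KV_def by (rule good_tprods) (auto intro: good_elem)

lemma KV_code:
  assumes n: "n \<ge> 1"
    and h: "\<forall>j<k. g j \<in> fvecs n \<and> has_span n (g j) (s j) \<and> fst (s j) < n \<and> 0 \<le> snd (s j) \<and> snd (s j) \<le> int n"
  shows "code n (KV n k (g :: nat \<Rightarrow> nat \<Rightarrow> 'f::field) s) = V.span (g ` {..<k})"
proof -
  have "code n (KV n k g s) = {\<Sum>j\<in>set [0..<k]. fscale (c j) (g j) | c. True}"
    unfolding KV_def by (rule code_kv[OF n]) (use h in auto)
  also have "set [0..<k] = {..<k}" by auto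
  finally show ?thesis using span_image_sum[of "{..<k}" g] by simp
qed

lemma KV_card: "card (TV (KV n k (g :: nat \<Rightarrow> nat \<Rightarrow> 'f::{finite,field}) s) i) = (\<Prod>j<k. fsz TYPE('f) n (s j) i)"
proof -
  have "card (TV (KV n k g s) i) = (\<Prod>j\<in>set [0..<k]. fsz TYPE('f) n (s j) i)"
    unfolding KV_def by (rule card_kv) simp
  also have "set [0..<k] = {..<k}" by auto
  finally show ?thesis .
qed

lemma card_gt1: "card (UNIV :: 'f::{finite,field} set) > 1"
proof -
  have "{0, 1} \<subseteq> (UNIV :: 'f set)" by simp
  then have "card {0, 1::'f} \<le> card (UNIV :: 'f set)" by (rule card_mono[OF finite_UNIV])
  then show ?thesis by simp
qed

lemma fsz_pos: "fsz TYPE('f::{finite,field}) n s i > 0"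
  using card_gt1[where 'f='f] by (simp add: fsz_def)

lemma prod_less:
  fixes f h :: "nat \<Rightarrow> nat"
  assumes "finite K" "j \<in> K" "\<forall>m\<in>K. f m \<le> h m" "f j < h j" "\<forall>m\<in>K. 0 < f m"
  shows "prod f K < prod h K"
proof -
  have "prod f K = f j * prod f (K - {j})" using assms by (simp add: prod.remove)
  also have "\<dots> < h j * prod h (K - {j})"
  proof (rule mult_less_le_imp_less)
    show "prod f (K - {j}) \<le> prod h (K - {j})" using assms by (intro prod_mono) auto
    show "0 < prod f (K - {j})" using assms by (intro prod_pos) auto
  qed (use assms in auto)
  also have "\<dots> = prod h K" using assms by (simp add: prod.remove)
  finally show ?thesis .
qed

lemma has_span_comb:
  assumes "has_span n u (a, l)" "has_span n v (a, l)"
  shows "has_span n (u - fscale c v) (a, l)"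
  using assms by (auto simp: has_span_def fscale_def) (metis mult_zero_right)



locale setting =
  fixes C :: "(nat \<Rightarrow> 'f::{finite,field}) set"
    and n k :: nat
    and \<alpha> :: "nat \<Rightarrow> nat \<Rightarrow> 'f"
    and s :: "nat \<Rightarrow> nat \<times> int"
  assumes n: "n \<ge> 1"
    and C_vecs: "C \<subseteq> fvecs n"
    and C_lin: "module.subspace fscale C"
    and C_dim: "vector_space.dim fscale C = k"
    and \<alpha>_spans: "\<forall>j<k. \<alpha> j \<in> fvecs n \<and> is_span n (s j) \<and> 0 \<le> snd (s j)
                        \<and> has_span n (\<alpha> j) (s j)"
    and T_min: "minimal_linear_trellis n C (KV n k \<alpha> s)"
begin

lemma s_props: "j < k \<Longrightarrow> fst (s j) < n \<and> 0 \<le> snd (s j) \<and> snd (s j) \<le> int n"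
  using \<alpha>_spans by (auto simp: is_span_def)

lemma span_\<alpha>: "V.span (\<alpha> ` {..<k}) = C"
proof -
  have "code n (KV n k \<alpha> s) = V.span (\<alpha> ` {..<k})"
    by (rule KV_code[OF n]) (use \<alpha>_spans s_props in auto)
  then show ?thesis using T_min by (simp add: minimal_linear_trellis_def)
qed

definition gen :: "(nat \<Rightarrow> nat \<Rightarrow> 'f) \<Rightarrow> bool" where
  "gen B \<longleftrightarrow> (\<forall>j<k. B j \<in> C \<and> has_span n (B j) (s j)) \<and> V.span (B ` {..<k}) = C"

lemma gen_\<alpha>: "gen \<alpha>"
  unfolding gen_def using span_\<alpha> \<alpha>_spans V.span_base[of _ "\<alpha> ` {..<k}"] by auto

lemma sub_C: "V.subspace C" using C_lin .

lemma no_smaller: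
  assumes "\<forall>i<n. card (TV T' i) = card (TV (KV n k \<alpha> s) i)"
  shows "\<not> (\<exists>T''. linear_trellis n T'' \<and> trim n T'' \<and> code n T'' = C \<and> smaller n T'' T')"
  using T_min assms unfolding minimal_linear_trellis_def smaller_def by auto

lemma key:
  assumes g: "gen B" and j: "j < k" and bC: "b \<in> C" and mb: "minimal_span n b (s j)"
  shows "b \<notin> V.span (B ` ({..<k} - {j}))"
proof
  let ?H = "V.span (B ` ({..<k} - {j}))"
  assume bH: "b \<in> ?H"
  obtain a l where sj: "s j = (a, l)" by fastforce
  have a: "a < n" and l0: "0 \<le> l" using s_props[OF j] sj by auto
  have ln: "l \<le> int n - 1" using minspan_len[OF n] mb sj by simp
  have ba: "b a \<noteq> 0" using minspan_start[OF n] mb sj l0 by simp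
  have BC: "\<And>m. m < k \<Longrightarrow> B m \<in> C" and Bs: "\<And>m. m < k \<Longrightarrow> has_span n (B m) (s m)"
    and spB: "V.span (B ` {..<k}) = C" using g by (auto simp: gen_def)
  define c where "c = B j a / b a"
  define \<gamma> where "\<gamma> = B j - fscale c b"
  have \<gamma>a: "\<gamma> a = 0" using ba by (simp add: \<gamma>_def c_def fscale_def)
  have \<gamma>C: "\<gamma> \<in> C" using sub_C BC[OF j] bC unfolding \<gamma>_def
    by (metis V.span_diff V.span_eq_iff V.span_scale)
  have ins: "B ` {..<k} = insert (B j) (B ` ({..<k} - {j}))" using j by auto
  have BjH: "B j \<notin> ?H"
  proof
    assume BjH: "B j \<in> ?H"
    have "B ` ({..<k} - {j}) \<subseteq> ?H" by (rule V.span_superset)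
    then have "B ` {..<k} \<subseteq> ?H" using ins BjH by (metis insert_subset)
    then have "C \<subseteq> ?H" using spB V.span_minimal[of "B ` {..<k}" ?H] by auto
    then have "V.dim C \<le> card (B ` ({..<k} - {j}))" by (intro V.dim_le_card) auto
    also have "\<dots> \<le> card ({..<k} - {j})" by (rule card_image_le) simp
    also have "\<dots> < k" using j by simp
    finally show False using C_dim by simp
  qed
  have \<gamma>H: "\<gamma> \<notin> ?H"
  proof
    assume "\<gamma> \<in> ?H"
    then have "\<gamma> + fscale c b \<in> ?H" using bH by (intro V.span_add V.span_scale)
    moreover have "\<gamma> + fscale c b = B j" by (simp add: \<gamma>_def)
    ultimately show False using BjH by simp
  qed
  have hb: "has_span n b (a, l)" using mb sj by (simp add: minimal_span_def)
  have hs\<gamma>: "has_span n \<gamma> (a, l)" unfolding \<gamma>_def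
    using has_span_comb[of n "B j" a l b c] Bs[OF j] hb sj by simp
  show False
  proof (cases "l = 0")
    case True
    have "\<forall>i<n. \<gamma> i = 0" using has_span_zero0[of n \<gamma> a] hs\<gamma> True a \<gamma>a n by simp
    moreover have "\<gamma> \<in> fvecs n" using \<gamma>C C_vecs by auto
    ultimately have z: "\<gamma> m = 0" for m by (cases "m < n") (auto simp: fvecs_def)
    then have "\<gamma> = 0" by (simp add: fun_eq_iff)
    then show False using \<gamma>H V.span_zero[of "B ` ({..<k} - {j})"] by metis
  next
    case False
    then have l1: "1 \<le> l" using l0 by simp
    then have l1n: "1 \<le> nat l" by simp
    have osub: "ointerval n (Suc a mod n) (nat l - 1) \<subseteq> ointerval n a (nat l)"
      by (rule oint_shift_sub[OF l1n])
    define t where "t = (Suc a mod n, l - 1)"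
    have hst: "has_span n \<gamma> t" unfolding t_def by (rule has_span_shift[OF n hs\<gamma> l1 ln a \<gamma>a])
    define B' where "B' = B(j := \<gamma>)"
    define s' where "s' = s(j := t)"
    have B'C: "\<And>m. m < k \<Longrightarrow> B' m \<in> C" using BC \<gamma>C by (simp add: B'_def)
    have "code n (KV n k B' s') = V.span (B' ` {..<k})"
    proof (rule KV_code[OF n], intro allI impI conjI)
      fix m assume m: "m < k"
      show "B' m \<in> fvecs n" using B'C[OF m] C_vecs by auto
      show "has_span n (B' m) (s' m)" using Bs[OF m] hst by (simp add: B'_def s'_def)
      show "fst (s' m) < n" "0 \<le> snd (s' m)" "snd (s' m) \<le> int n"
        using s_props[OF m] n l1 ln by (auto simp: s'_def t_def)
    qed
    also have "V.span (B' ` {..<k}) = C"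
    proof
      show "V.span (B' ` {..<k}) \<subseteq> C" using B'C sub_C by (intro V.span_minimal) auto
      have same: "B' ` ({..<k} - {j}) = B ` ({..<k} - {j})" by (auto simp: B'_def)
      have sub1: "?H \<subseteq> V.span (B' ` {..<k})" unfolding same[symmetric] by (intro V.span_mono) auto
      have "B j \<in> V.span (B' ` {..<k})"
      proof -
        have "\<gamma> \<in> V.span (B' ` {..<k})" using j by (intro V.span_base) (auto simp: B'_def)
        moreover have "fscale c b \<in> V.span (B' ` {..<k})" using sub1 bH V.span_scale by auto
        ultimately have "\<gamma> + fscale c b \<in> V.span (B' ` {..<k})" by (rule V.span_add)
        then show ?thesis by (simp add: \<gamma>_def)
      qed
      moreover have "B ` ({..<k} - {j}) \<subseteq> V.span (B' ` {..<k})"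
        using sub1 V.span_superset[of "B ` ({..<k} - {j})"] by blast
      ultimately have "B ` {..<k} \<subseteq> V.span (B' ` {..<k})" using ins by (metis insert_subset)
      then show "C \<subseteq> V.span (B' ` {..<k})" using spB
        by (metis V.span_minimal V.subspace_span)
    qed
    finally have codeC: "code n (KV n k B' s') = C" .
    have "smaller n (KV n k B' s') (KV n k \<alpha> s)"
      unfolding smaller_def KV_card
    proof (intro conjI allI impI)
      have le: "fsz TYPE('f) n (s' m) i \<le> fsz TYPE('f) n (s m) i" for m i
      proof (cases "m = j")
        case True
        have "active n t i \<Longrightarrow> active n (s j) i"
          using osub l1 ln sj
          by (auto simp: active_def t_def nat_diff_distrib)
        then show ?thesis using True card_gt1[where 'f='f] by (auto simp: fsz_def s'_def)
      qed (simp add: s'_def)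
      fix i assume "i < n"
      show "(\<Prod>j<k. fsz TYPE('f) n (s' j) i) \<le> (\<Prod>j<k. fsz TYPE('f) n (s j) i)"
        using le by (intro prod_mono) auto
    next
      let ?i = "Suc a mod n"
      have i: "?i < n" using n by simp
      have "fsz TYPE('f) n (s' j) ?i < fsz TYPE('f) n (s j) ?i"
      proof -
        have "active n (s j) ?i" using shift_in[OF a, of "nat l"] l1 ln sj by (simp add: active_def)
        moreover have "\<not> active n t ?i"
          using shift_notin[of "nat l" n a] l1 ln by (simp add: active_def t_def nat_diff_distrib)
        ultimately show ?thesis using card_gt1[where 'f='f] by (simp add: fsz_def s'_def)
      qed
      moreover have "fsz TYPE('f) n (s' m) ?i \<le> fsz TYPE('f) n (s m) ?i" for m
      proof (cases "m = j")
        case True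
        have "active n t ?i \<Longrightarrow> active n (s j) ?i"
          using osub l1 ln sj
          by (auto simp: active_def t_def nat_diff_distrib)
        then show ?thesis using True card_gt1[where 'f='f] by (auto simp: fsz_def s'_def)
      qed (simp add: s'_def)
      ultimately have "(\<Prod>j<k. fsz TYPE('f) n (s' j) ?i) < (\<Prod>j<k. fsz TYPE('f) n (s j) ?i)"
        using j fsz_pos[where 'f='f] by (intro prod_less) auto
      then show "\<exists>i<n. (\<Prod>j<k. fsz TYPE('f) n (s' j) i) < (\<Prod>j<k. fsz TYPE('f) n (s j) i)"
        using i by blast
    qed
    moreover have "good n (KV n k B' s')" by (rule KV_good)
    ultimately show False using T_min codeC
      unfolding minimal_linear_trellis_def good_def by blast
  qed
qed

end



context setting
begin

lemma exch:
  assumes g: "gen B" and j: "j < k" and bC: "b \<in> C" and mb: "minimal_span n b (s j)"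
  shows "gen (B(j := b))"
proof -
  let ?S = "B ` ({..<k} - {j})"
  have nb: "b \<notin> V.span ?S" by (rule key[OF g j bC mb])
  have spB: "V.span (B ` {..<k}) = C" and BC: "\<And>m. m < k \<Longrightarrow> B m \<in> C"
    and Bs: "\<And>m. m < k \<Longrightarrow> has_span n (B m) (s m)" using g by (auto simp: gen_def)
  have ins: "B ` {..<k} = insert (B j) ?S" using j by auto
  have ins': "(B(j := b)) ` {..<k} = insert b ?S"
  proof -
    have "{..<k} = insert j ({..<k} - {j})" using j by auto
    then have "(B(j := b)) ` {..<k} = insert ((B(j := b)) j) ((B(j := b)) ` ({..<k} - {j}))" by (metis image_insert)
    also have "(B(j := b)) ` ({..<k} - {j}) = ?S" by (intro image_cong) auto
    finally show ?thesis by simp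
  qed
  have "V.span (insert (B j) ?S) = C" using spB ins by (metis)
  then have "b \<in> V.span (insert (B j) ?S)" using bC by simp
  then have "B j \<in> V.span (insert b ?S)" using nb by (rule V.in_span_insert)
  moreover have "?S \<subseteq> V.span (insert b ?S)"
    using V.span_mono[of ?S "insert b ?S"] V.span_superset[of ?S] by fast
  ultimately have "B ` {..<k} \<subseteq> V.span (insert b ?S)" using ins by (metis insert_subset)
  then have "C \<subseteq> V.span (insert b ?S)" using spB by (metis V.span_minimal V.subspace_span)
  moreover have "V.span (insert b ?S) \<subseteq> C" using bC BC sub_C by (intro V.span_minimal) auto
  ultimately have "V.span ((B(j := b)) ` {..<k}) = C" unfolding ins' by (rule antisym[rotated])
  moreover have "b \<in> C \<and> has_span n b (s j)" using bC mb by (simp add: minimal_span_def)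
  moreover have "\<forall>m<k. (B(j := b)) m \<in> C \<and> has_span n ((B(j := b)) m) (s m)"
    using BC Bs calculation(2) by simp
  ultimately show ?thesis unfolding gen_def by blast
qed

lemma gen_\<beta>:
  assumes \<beta>: "\<forall>j<k. \<beta> j \<in> C \<and> minimal_span n (\<beta> j) (s j)"
  shows "gen \<beta>"
proof -
  have "p \<le> k \<Longrightarrow> gen (\<lambda>m. if m < p then \<beta> m else \<alpha> m)" for p
  proof (induction p)
    case 0 then show ?case using gen_\<alpha> by simp
  next
    case (Suc p)
    then have "gen ((\<lambda>m. if m < p then \<beta> m else \<alpha> m)(p := \<beta> p))"
      using \<beta> by (intro exch) auto
    moreover have "(\<lambda>m. if m < p then \<beta> m else \<alpha> m)(p := \<beta> p) = (\<lambda>m. if m < Suc p then \<beta> m else \<alpha> m)"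
      by (auto simp: fun_eq_iff)
    ultimately show ?case by simp
  qed
  from this[of k] have "gen (\<lambda>m. if m < k then \<beta> m else \<alpha> m)" by simp
  moreover have "(\<lambda>m. if m < k then \<beta> m else \<alpha> m) ` {..<k} = \<beta> ` {..<k}" by auto
  ultimately show ?thesis by (simp add: gen_def)
qed

end

theorem mainTheorem16:
  fixes C :: "(nat \<Rightarrow> 'f::{finite,field}) set"
    and n k :: nat
    and \<alpha> \<beta> :: "nat \<Rightarrow> nat \<Rightarrow> 'f"
    and s :: "nat \<Rightarrow> nat \<times> int"
  assumes n: "n \<ge> 1"
    and C_vecs: "C \<subseteq> fvecs n"
    and C_lin: "module.subspace fscale C"
    and C_dim: "vector_space.dim fscale C = k"
    and C_supp: "\<forall>i<n. \<exists>c\<in>C. c i \<noteq> 0"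
    and \<alpha>_spans: "\<forall>j<k. \<alpha> j \<in> fvecs n \<and> is_span n (s j) \<and> 0 \<le> snd (s j)
                        \<and> has_span n (\<alpha> j) (s j)"
    and T_min: "minimal_linear_trellis n C (tprods (map (\<lambda>j. elementary n (\<alpha> j) (s j)) [0..<k]))"
    and \<beta>: "\<forall>j<k. \<beta> j \<in> C \<and> minimal_span n (\<beta> j) (s j)"
  shows "(inj_on \<beta> {..<k} \<and> module.independent fscale (\<beta> ` {..<k})
           \<and> module.span fscale (\<beta> ` {..<k}) = C)
         \<and> minimal_linear_trellis n C (tprods (map (\<lambda>j. elementary n (\<beta> j) (s j)) [0..<k]))"
proof -
  have Tm: "minimal_linear_trellis n C (KV n k \<alpha> s)" using T_min unfolding KV_def .
  interpret S: setting C n k \<alpha> s by (rule setting.intro[OF n C_vecs C_lin C_dim \<alpha>_spans Tm])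
  have g: "S.gen \<beta>" by (rule S.gen_\<beta>[OF \<beta>])
  then have sp: "V.span (\<beta> ` {..<k}) = C" and bC: "\<And>m. m < k \<Longrightarrow> \<beta> m \<in> C"
    unfolding S.gen_def by blast+
  have fin: "finite (\<beta> ` {..<k})" by simp
  have sub: "\<beta> ` {..<k} \<subseteq> C" using bC by blast
  have "V.dim C \<le> card (\<beta> ` {..<k})" using sp fin by (intro V.dim_le_card) simp_all
  then have dle: "k \<le> card (\<beta> ` {..<k})" using C_dim by simp
  have cle: "card (\<beta> ` {..<k}) \<le> card {..<k}" by (rule card_image_le) simp
  have inj: "inj_on \<beta> {..<k}" using dle cle by (intro eq_card_imp_inj_on) simp_all
  have ind: "V.independent (\<beta> ` {..<k})"
  proof
    let ?B = "\<beta> ` {..<k}"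
    assume "V.dependent ?B"
    then obtain a where a: "a \<in> ?B" "a \<in> V.span (?B - {a})" unfolding V.dependent_def by blast
    have sup: "?B - {a} \<subseteq> V.span (?B - {a})" by (rule V.span_superset)
    have "?B \<subseteq> V.span (?B - {a})"
    proof
      fix x assume "x \<in> ?B"
      then show "x \<in> V.span (?B - {a})" using a(2) sup by (cases "x = a") auto
    qed
    then have "C \<subseteq> V.span (?B - {a})" using sp by (metis V.span_minimal V.subspace_span)
    then have "V.dim C \<le> card (?B - {a})" by (intro V.dim_le_card) simp_all
    also have "\<dots> < card ?B" using a(1) fin by (intro psubset_card_mono) auto
    also have "\<dots> \<le> k" using cle by simp
    finally show False using C_dim by simp
  qed
  have prem: "\<forall>j<k. \<beta> j \<in> fvecs n \<and> has_span n (\<beta> j) (s j) \<and> fst (s j) < n \<and> 0 \<le> snd (s j) \<and> snd (s j) \<le> int n"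
  proof (intro allI impI conjI)
    fix j assume j: "j < k"
    show "\<beta> j \<in> fvecs n" using bC[OF j] C_vecs by blast
    show "has_span n (\<beta> j) (s j)" using \<beta> j unfolding minimal_span_def by blast
    show "fst (s j) < n" "0 \<le> snd (s j)" "snd (s j) \<le> int n" using S.s_props[OF j] by simp_all
  qed
  have codeB: "code n (KV n k \<beta> s) = C"
    using KV_code[OF n prem] sp by simp
  have cards: "\<forall>i<n. card (TV (KV n k \<beta> s) i) = card (TV (KV n k \<alpha> s) i)"
    by (simp add: KV_card)
  have gd: "good n (KV n k \<beta> s)" by (rule KV_good)
  have "minimal_linear_trellis n C (KV n k \<beta> s)"
    unfolding minimal_linear_trellis_def
    using gd codeB S.no_smaller[OF cards] unfolding good_def by (intro conjI) simp_all
  then have "minimal_linear_trellis n C (tprods (map (\<lambda>j. elementary n (\<beta> j) (s j)) [0..<k]))"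
    unfolding KV_def .
  then show ?thesis using inj ind sp by simp
qed


end
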